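(* Let $\Phi(n)$ be an $\mathrm{st}_{\mathbb N}$-prenex formula, possibly with arbitrary (not necessarily standard) parameters. Then (in SPOT) $$\exists^{\mathrm{st}} S\;\forall^{\mathrm{st}} n\;\big(n\in S \iff n\in\mathbb N\wedge \Phi(n)\big).$$
   Context: We work in the theory SPOT. Its language is the $\in$-language (membership together with the usual defined symbols of mathematics such as $\mathbb N,\mathbb R,<,+,\cdot$) enriched by a unary predicate $\mathrm{st}$ ("$x$ is standard"). An $\in$-formula is a formula not mentioning $\mathrm{st}$. $\forall^{\mathrm{st}}x$ and $\exists^{\mathrm{st}}x$ denote quantifiers restricted to standard sets. The axioms of SPOT are: ZF; Transfer: for every $\in$-formula $\varphi(x)$ all of whose parameters are standard, $\forall^{\mathrm{st}}x\,\varphi(x)\to\forall x\,\varphi(x)$; Nontriviality: $\exists \nu\in\mathbb N\,\forall^{\mathrm{st}}n\in\mathbb N\,(n\neq\nu)$; Standard Part: $\forall A\subseteq\mathbb N\,\exists^{\mathrm{st}}B\subseteq\mathbb N\,\forall^{\mathrm{st}}n\in\mathbb N\,(n\in B\iff n\in A)$. A real $x$ is limited if $|x|\le n$ for some standard $n\in\mathbb N$; $x\approx r$ means $|x-r|\le 1/n$ for all standard $n\ge 1$; $x$ is infinitesimal if $x\approx 0$ and $x\ne0$; for limited $x$, $\mathrm{sh}(x)$ denotes the unique standard real $r$ with $x\approx r$. Write $\forall^{\mathrm{st}}_{\mathbb N}u\,\dots$ for $\forall u\,(u\in\mathbb N\wedge\mathrm{st}(u)\to\dots)$ and $\exists^{\mathrm{st}}_{\mathbb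 N}u\,\dots$ for $\exists u\,(u\in\mathbb N\wedge\mathrm{st}(u)\wedge\dots)$. An $\mathrm{st}_{\mathbb N}$-prenex formula is a formula of the form $\mathsf Q^{\mathrm{st}}_{\mathbb N}u_1\cdots\mathsf Q^{\mathrm{st}}_{\mathbb N}u_s\,\psi(u_1,\dots,u_s,v_1,\dots,v_r)$ where $\psi$ is an $\in$-formula and each $\mathsf Q$ is $\forall$ or $\exists$. *)

theory Defs
  imports Main
begin

text \<open>Deep embedding of first-order \<in>-formulas (no st predicate): these are
  exactly the internal formulas.  Variables are natural numbers.\<close>

datatype fm = Mem nat nat | Eq nat nat | Neg fm | Conj fm fm | Ex nat fm

fun sat :: "('u \<Rightarrow> 'u \<Rightarrow> bool) \<Rightarrow> (nat \<Rightarrow> 'u) \<Rightarrow> fm \<Rightarrow> bool" where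
  "sat M \<rho> (Mem i j) = M (\<rho> i) (\<rho> j)"
| "sat M \<rho> (Eq i j) = (\<rho> i = \<rho> j)"
| "sat M \<rho> (Neg \<phi>) = (\<not> sat M \<rho> \<phi>)"
| "sat M \<rho> (Conj \<phi> \<psi>) = (sat M \<rho> \<phi> \<and> sat M \<rho> \<psi>)"
| "sat M \<rho> (Ex v \<phi>) = (\<exists>a. sat M (\<rho>(v := a)) \<phi>)"

fun fv :: "fm \<Rightarrow> nat set" where
  "fv (Mem i j) = {i, j}"
| "fv (Eq i j) = {i, j}"
| "fv (Neg \<phi>) = fv \<phi>"
| "fv (Conj \<phi> \<psi>) = fv \<phi> \<union> fv \<psi>"
| "fv (Ex v \<phi>) = fv \<phi> - {v}"

definition inductive_set_zf :: "('u \<Rightarrow> 'u \<Rightarrow> bool) \<Rightarrow> 'u \<Rightarrow> bool" where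
  "inductive_set_zf M w \<longleftrightarrow>
     (\<exists>e. M e w \<and> (\<forall>y. \<not> M y e)) \<and>
     (\<forall>x. M x w \<longrightarrow> (\<exists>s. M s w \<and> (\<forall>y. M y s \<longleftrightarrow> M y x \<or> y = x)))"

definition zf_model :: "('u \<Rightarrow> 'u \<Rightarrow> bool) \<Rightarrow> bool" where
  "zf_model M \<longleftrightarrow>
     \<comment> \<open>Extensionality\<close>
     (\<forall>a b. (\<forall>x. M x a \<longleftrightarrow> M x b) \<longrightarrow> a = b) \<and>
     \<comment> \<open>Foundation\<close>
     (\<forall>a. (\<exists>x. M x a) \<longrightarrow> (\<exists>x. M x a \<and> \<not> (\<exists>y. M y x \<and> M y a))) \<and>
     \<comment> \<open>Pairing\<close>
     (\<forall>a b. \<exists>c. \<forall>x. M x c \<longleftrightarrow> x = a \<or> x = b) \<and>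
     \<comment> \<open>Union\<close>
     (\<forall>a. \<exists>c. \<forall>x. M x c \<longleftrightarrow> (\<exists>y. M y a \<and> M x y)) \<and>
     \<comment> \<open>Power set\<close>
     (\<forall>a. \<exists>c. \<forall>x. M x c \<longleftrightarrow> (\<forall>y. M y x \<longrightarrow> M y a)) \<and>
     \<comment> \<open>Infinity\<close>
     (\<exists>w. inductive_set_zf M w) \<and>
     \<comment> \<open>Separation schema (\<in>-formulas, arbitrary parameters)\<close>
     (\<forall>\<phi> \<rho> k a. \<exists>b. \<forall>x. M x b \<longleftrightarrow> M x a \<and> sat M (\<rho>(k := x)) \<phi>) \<and>
     \<comment> \<open>Replacement schema (\<in>-formulas, arbitrary parameters)\<close>
     (\<forall>\<phi> \<rho> k l a. k \<noteq> l \<longrightarrow>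
        (\<forall>x. M x a \<longrightarrow> (\<exists>!y. sat M (\<rho>(k := x, l := y)) \<phi>)) \<longrightarrow>
        (\<exists>c. \<forall>y. M y c \<longleftrightarrow> (\<exists>x. M x a \<and> sat M (\<rho>(k := x, l := y)) \<phi>)))"

definition nat_zf :: "('u \<Rightarrow> 'u \<Rightarrow> bool) \<Rightarrow> 'u" where
  "nat_zf M = (THE w. inductive_set_zf M w \<and>
                 (\<forall>z. inductive_set_zf M z \<longrightarrow> (\<forall>x. M x w \<longrightarrow> M x z)))"

definition spot_model :: "('u \<Rightarrow> 'u \<Rightarrow> bool) \<Rightarrow> ('u \<Rightarrow> bool) \<Rightarrow> bool" where
  "spot_model M st \<longleftrightarrow>
     zf_model M \<and>
     \<comment> \<open>Transfer: \<in>-formula \<phi>(x) with all parameters standard\<close>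
     (\<forall>\<phi> x \<rho>. (\<forall>v\<in>fv \<phi> - {x}. st (\<rho> v)) \<longrightarrow>
        (\<forall>a. st a \<longrightarrow> sat M (\<rho>(x := a)) \<phi>) \<longrightarrow> (\<forall>a. sat M (\<rho>(x := a)) \<phi>)) \<and>
     \<comment> \<open>Nontriviality\<close>
     (\<exists>\<nu>. M \<nu> (nat_zf M) \<and> (\<forall>n. st n \<and> M n (nat_zf M) \<longrightarrow> n \<noteq> \<nu>)) \<and>
     \<comment> \<open>Standard Part\<close>
     (\<forall>A. (\<forall>x. M x A \<longrightarrow> M x (nat_zf M)) \<longrightarrow>
        (\<exists>B. st B \<and> (\<forall>x. M x B \<longrightarrow> M x (nat_zf M)) \<and>
             (\<forall>n. st n \<and> M n (nat_zf M) \<longrightarrow> (M n B \<longleftrightarrow> M n A))))"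

text \<open>A quantifier prefix is a list of pairs (q, u): q = True means
  \<forall>st_N u, q = False means \<exists>st_N u.  The matrix is an \<in>-formula.\<close>
fun sat_prenex :: "('u \<Rightarrow> 'u \<Rightarrow> bool) \<Rightarrow> ('u \<Rightarrow> bool) \<Rightarrow> (nat \<Rightarrow> 'u)
                     \<Rightarrow> (bool \<times> nat) list \<Rightarrow> fm \<Rightarrow> bool" where
  "sat_prenex M st \<rho> [] \<psi> = sat M \<rho> \<psi>"
| "sat_prenex M st \<rho> ((True, u) # qs) \<psi> =
     (\<forall>a. M a (nat_zf M) \<and> st a \<longrightarrow> sat_prenex M st (\<rho>(u := a)) qs \<psi>)"
| "sat_prenex M st \<rho> ((False, u) # qs) \<psi> =
     (\<exists>a. M a (nat_zf M) \<and> st a \<and> sat_prenex M st (\<rho>(u := a)) qs \<psi>)"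

end

theory Submission
  imports Defs
begin



datatype tm = B nat | P nat
datatype df = DMem tm tm | DEq tm tm | DNeg df | DConj df df | DEx df

definition econs :: "'u \<Rightarrow> (nat \<Rightarrow> 'u) \<Rightarrow> nat \<Rightarrow> 'u" (infixr "##" 65) where
  "econs a e = (\<lambda>i. case i of 0 \<Rightarrow> a | Suc j \<Rightarrow> e j)"

lemma econs_0[simp]: "(a ## e) 0 = a" and econs_Suc[simp]: "(a ## e) (Suc i) = e i"
  by (simp_all add: econs_def)

lemma econs_numeral[simp]: "(a ## e) (numeral k) = e (pred_numeral k)"
  by (simp add: numeral_eq_Suc)

fun ev :: "(nat \<Rightarrow> 'u) \<Rightarrow> (nat \<Rightarrow> 'u) \<Rightarrow> tm \<Rightarrow> 'u" where
  "ev e p (B i) = e i" | "ev e p (P j) = p j"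

fun dsat :: "('u \<Rightarrow> 'u \<Rightarrow> bool) \<Rightarrow> (nat \<Rightarrow> 'u) \<Rightarrow> (nat \<Rightarrow> 'u) \<Rightarrow> df \<Rightarrow> bool" where
  "dsat M e p (DMem s t) = M (ev e p s) (ev e p t)"
| "dsat M e p (DEq s t) = (ev e p s = ev e p t)"
| "dsat M e p (DNeg f) = (\<not> dsat M e p f)"
| "dsat M e p (DConj f g) = (dsat M e p f \<and> dsat M e p g)"
| "dsat M e p (DEx f) = (\<exists>a. dsat M (a ## e) p f)"

fun lift :: "tm \<Rightarrow> tm" where "lift (B i) = B (Suc i)" | "lift (P j) = P j"

lemma ev_lift[simp]: "ev (a ## e) p (lift t) = ev e p t" by (cases t) auto

fun tcl :: "nat \<Rightarrow> tm \<Rightarrow> bool" where "tcl d (B i) = (i < d)" | "tcl d (P j) = True"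
fun cl :: "nat \<Rightarrow> df \<Rightarrow> bool" where
  "cl d (DMem s t) = (tcl d s \<and> tcl d t)"
| "cl d (DEq s t) = (tcl d s \<and> tcl d t)"
| "cl d (DNeg f) = cl d f"
| "cl d (DConj f g) = (cl d f \<and> cl d g)"
| "cl d (DEx f) = cl (Suc d) f"

lemma tcl_lift[simp]: "tcl (Suc d) (lift t) = tcl d t" by (cases t) auto

fun tpars :: "tm \<Rightarrow> nat set" where "tpars (B i) = {}" | "tpars (P j) = {j}"
fun pars :: "df \<Rightarrow> nat set" where
  "pars (DMem s t) = tpars s \<union> tpars t"
| "pars (DEq s t) = tpars s \<union> tpars t"
| "pars (DNeg f) = pars f"
| "pars (DConj f g) = pars f \<union> pars g"
| "pars (DEx f) = pars f"

lemma tpars_lift[simp]: "tpars (lift t) = tpars t" by (cases t) auto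

fun trt :: "nat \<Rightarrow> (nat \<Rightarrow> nat) \<Rightarrow> nat \<Rightarrow> tm \<Rightarrow> nat" where
  "trt m pv d (B i) = m + (d - Suc i)" | "trt m pv d (P j) = pv j"
fun tr :: "nat \<Rightarrow> (nat \<Rightarrow> nat) \<Rightarrow> nat \<Rightarrow> df \<Rightarrow> fm" where
  "tr m pv d (DMem s t) = Mem (trt m pv d s) (trt m pv d t)"
| "tr m pv d (DEq s t) = Eq (trt m pv d s) (trt m pv d t)"
| "tr m pv d (DNeg f) = Neg (tr m pv d f)"
| "tr m pv d (DConj f g) = Conj (tr m pv d f) (tr m pv d g)"
| "tr m pv d (DEx f) = Ex (m + d) (tr m pv (Suc d) f)"

lemma trt_ev:
  assumes "tcl d t" "\<forall>i<d. e i = \<rho> (m + (d - Suc i))" "\<forall>j\<in>tpars t. \<rho> (pv j) = p j"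
  shows "\<rho> (trt m pv d t) = ev e p t"
  using assms by (cases t) auto

lemma tr_sat:
  assumes "cl d f" "\<forall>i<d. e i = \<rho> (m + (d - Suc i))" "\<forall>j\<in>pars f. \<rho> (pv j) = p j"
    "\<forall>j\<in>pars f. pv j < m"
  shows "sat M \<rho> (tr m pv d f) = dsat M e p f"
  using assms
proof (induction f arbitrary: d e \<rho>)
  case (DMem s t)
  have 1: "\<rho> (trt m pv d s) = ev e p s" by (rule trt_ev) (use DMem.prems in simp_all)
  have 2: "\<rho> (trt m pv d t) = ev e p t" by (rule trt_ev) (use DMem.prems in simp_all)
  show ?case by (simp only: tr.simps sat.simps dsat.simps 1 2)
next
  case (DEq s t)
  have 1: "\<rho> (trt m pv d s) = ev e p s" by (rule trt_ev) (use DEq.prems in simp_all)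
  have 2: "\<rho> (trt m pv d t) = ev e p t" by (rule trt_ev) (use DEq.prems in simp_all)
  show ?case by (simp only: tr.simps sat.simps dsat.simps 1 2)
next
  case (DNeg f)
  then show ?case by simp
next
  case (DConj f g)
  have 1: "sat M \<rho> (tr m pv d f) = dsat M e p f" by (rule DConj.IH(1)) (use DConj.prems in simp_all)
  have 2: "sat M \<rho> (tr m pv d g) = dsat M e p g" by (rule DConj.IH(2)) (use DConj.prems in simp_all)
  show ?case using 1 2 by simp
next
  case (DEx f)
  show ?case
  proof -
    have "sat M (\<rho>(m + d := a)) (tr m pv (Suc d) f) = dsat M (a ## e) p f" for a
    proof (rule DEx.IH)
      show "cl (Suc d) f" using DEx by simp
      show "\<forall>i<Suc d. (a ## e) i = (\<rho>(m + d := a)) (m + (Suc d - Suc i))"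
      proof (intro allI impI)
        fix i assume "i < Suc d"
        then show "(a ## e) i = (\<rho>(m + d := a)) (m + (Suc d - Suc i))"
          using DEx.prems(2) by (cases i) auto
      qed
      show "\<forall>j\<in>pars f. (\<rho>(m + d := a)) (pv j) = p j" using DEx.prems by fastforce
      show "\<forall>j\<in>pars f. pv j < m" using DEx.prems by simp
    qed
    then show ?thesis by simp
  qed
qed

lemma fv_trt: "tcl d t \<Longrightarrow> trt m pv d t \<in> {k. m \<le> k \<and> k < m + d} \<union> pv ` tpars t"
  by (cases t) auto

lemma fv_tr: "cl d f \<Longrightarrow> fv (tr m pv d f) \<subseteq> {k. m \<le> k \<and> k < m + d} \<union> pv ` pars f"
proof (induction f arbitrary: d)
  case (DMem s t) then show ?case using fv_trt[of d s m pv] fv_trt[of d t m pv] by auto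
next
  case (DEq s t) then show ?case using fv_trt[of d s m pv] fv_trt[of d t m pv] by auto
next
  case (DNeg f) then show ?case by simp
next
  case (DConj f g)
  have 1: "fv (tr m pv d f) \<subseteq> {k. m \<le> k \<and> k < m + d} \<union> pv ` pars f" using DConj by simp
  have 2: "fv (tr m pv d g) \<subseteq> {k. m \<le> k \<and> k < m + d} \<union> pv ` pars g" using DConj by simp
  show ?case using 1 2 by auto
next
  case (DEx f)
  then have "fv (tr m pv (Suc d) f) \<subseteq> {k. m \<le> k \<and> k < m + Suc d} \<union> pv ` pars f"
    using DEx.IH[of "Suc d"] by simp
  then show ?case by auto
qed

lemma ev_cong: "tcl d t \<Longrightarrow> (\<forall>i<d. e i = e' i) \<Longrightarrow> (\<forall>j\<in>tpars t. p j = p' j) \<Longrightarrow> ev e p t = ev e' p' t"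
  by (cases t) auto

lemma dsat_cong:
  "cl d f \<Longrightarrow> (\<forall>i<d. e i = e' i) \<Longrightarrow> (\<forall>j\<in>pars f. p j = p' j) \<Longrightarrow> dsat M e p f = dsat M e' p' f"
proof (induction f arbitrary: d e e')
  case (DMem s t) then show ?case using ev_cong[of d s e e' p p'] ev_cong[of d t e e' p p'] by simp
next
  case (DEq s t) then show ?case using ev_cong[of d s e e' p p'] ev_cong[of d t e e' p p'] by simp
next
  case (DNeg f) then show ?case by simp
next
  case (DConj f g)
  have 1: "dsat M e p f = dsat M e' p' f" by (rule DConj.IH(1)[of d]) (use DConj.prems in simp_all)
  have 2: "dsat M e p g = dsat M e' p' g" by (rule DConj.IH(2)[of d]) (use DConj.prems in simp_all)
  show ?case using 1 2 by simp
next
  case (DEx f)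
  have "dsat M (a ## e) p f = dsat M (a ## e') p' f" for a
    by (rule DEx.IH[of "Suc d"]) (use DEx.prems in \<open>auto simp: less_Suc_eq_0_disj\<close>)
  then show ?case by simp
qed




abbreviation "DAll f \<equiv> DNeg (DEx (DNeg f))"
abbreviation "DImp f g \<equiv> DNeg (DConj f (DNeg g))"
abbreviation "DOr f g \<equiv> DNeg (DConj (DNeg f) (DNeg g))"
abbreviation "DIff f g \<equiv> DConj (DImp f g) (DImp g f)"

fun tpb :: "tm \<Rightarrow> nat" where "tpb (B i) = 0" | "tpb (P j) = Suc j"
fun pb :: "df \<Rightarrow> nat" where
  "pb (DMem s t) = max (tpb s) (tpb t)"
| "pb (DEq s t) = max (tpb s) (tpb t)"
| "pb (DNeg f) = pb f"
| "pb (DConj f g) = max (pb f) (pb g)"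
| "pb (DEx f) = pb f"

lemma pb_pars: "j \<in> pars f \<Longrightarrow> j < pb f"
proof (induction f)
  case (DMem s t) then show ?case by (cases s; cases t) auto
next
  case (DEq s t) then show ?case by (cases s; cases t) auto
qed auto

locale spot =
  fixes M :: "'u \<Rightarrow> 'u \<Rightarrow> bool" and st :: "'u \<Rightarrow> bool"
  assumes spot: "spot_model M st"
begin

abbreviation "N \<equiv> nat_zf M"

lemma zf: "zf_model M" using spot by (simp add: spot_model_def)

lemma ax_ext: "\<forall>a b. (\<forall>x. M x a \<longleftrightarrow> M x b) \<longrightarrow> a = b"
  using zf unfolding zf_model_def by simp

lemma ax_found: "\<forall>a. (\<exists>x. M x a) \<longrightarrow> (\<exists>x. M x a \<and> \<not> (\<exists>y. M y x \<and> M y a))"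
  using zf unfolding zf_model_def by simp

lemma ax_pair: "\<forall>a b. \<exists>c. \<forall>x. M x c \<longleftrightarrow> x = a \<or> x = b"
  using zf unfolding zf_model_def by simp

lemma ax_union: "\<forall>a. \<exists>c. \<forall>x. M x c \<longleftrightarrow> (\<exists>y. M y a \<and> M x y)"
  using zf unfolding zf_model_def by simp

lemma ax_inf: "\<exists>w. inductive_set_zf M w"
  using zf unfolding zf_model_def by simp

lemma ax_sep: "\<forall>\<phi> \<rho> k a. \<exists>b. \<forall>x. M x b \<longleftrightarrow> M x a \<and> sat M (\<rho>(k := x)) \<phi>"
  using zf unfolding zf_model_def by simp

lemma ext: "(\<And>z. M z a \<longleftrightarrow> M z b) \<Longrightarrow> a = b"
  using ax_ext by blast

lemma Sep: "cl 1 f \<Longrightarrow> \<exists>b. \<forall>x. M x b \<longleftrightarrow> M x a \<and> dsat M (x ## e) p f"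
proof -
  assume cl: "cl 1 f"
  define m where "m = pb f"
  obtain b where b: "\<forall>x. M x b \<longleftrightarrow> M x a \<and> sat M (p(m := x)) (tr m id 1 f)"
    using ax_sep by blast
  have "sat M (p(m := x)) (tr m id 1 f) = dsat M (x ## e) p f" for x
    by (rule tr_sat) (use cl pb_pars in \<open>auto simp: m_def\<close>)
  then show ?thesis using b by auto
qed

lemma Transfer:
  assumes cl: "cl 1 f" and ps: "\<forall>j\<in>pars f. st (p j)"
    and h: "\<forall>x. st x \<longrightarrow> dsat M (x ## e) p f"
  shows "dsat M (x ## e) p f"
proof -
  define m where "m = pb f"
  have tr: "sat M (p(m := x)) (tr m id 1 f) = dsat M (x ## e) p f" for x
    by (rule tr_sat) (use cl pb_pars in \<open>auto simp: m_def\<close>)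
  have T: "\<forall>v\<in>fv (tr m id 1 f) - {m}. st (p v)"
    using fv_tr[OF cl, of m id] ps by auto
  have "\<forall>a. st a \<longrightarrow> sat M (p(m := a)) (tr m id 1 f)" using h tr by simp
  then have "\<forall>a. sat M (p(m := a)) (tr m id 1 f)"
    using spot T unfolding spot_model_def by blast
  then show ?thesis using tr by simp
qed

lemma TransferEx:
  assumes cl: "cl 1 f" and ps: "\<forall>j\<in>pars f. st (p j)"
    and h: "dsat M (x ## e) p f"
  shows "\<exists>y. st y \<and> dsat M (y ## e) p f"
proof (rule ccontr)
  assume "\<not> ?thesis"
  then have h2: "\<forall>y. st y \<longrightarrow> dsat M (y ## e) p (DNeg f)" by simp
  have "dsat M (x ## e) p (DNeg f)" using Transfer[of "DNeg f" p e x] cl ps h2 by simp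
  then show False using h by simp
qed

lemma TransferUniq:
  assumes cl: "cl 1 f" and ps: "\<forall>j\<in>pars f. st (p j)"
    and h: "dsat M (x ## e) p f" and u: "\<And>y. dsat M (y ## e) p f \<Longrightarrow> y = x"
  shows "st x"
  using TransferEx[OF cl ps h] u by blast

definition setof where "setof Q = (THE c. \<forall>z. M z c \<longleftrightarrow> Q z)"

lemma M_setof: assumes "\<exists>c. \<forall>z. M z c \<longleftrightarrow> Q z" shows "M z (setof Q) \<longleftrightarrow> Q z"
proof -
  obtain c where c: "\<forall>z. M z c \<longleftrightarrow> Q z" using assms by blast
  have u: "d = c" if hd: "\<forall>z. M z d \<longleftrightarrow> Q z" for d
    by (rule ext) (use hd c in blast)
  have "\<forall>z. M z (setof Q) \<longleftrightarrow> Q z" unfolding setof_def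
  proof (rule theI[of _ c])
    show "\<forall>z. M z c \<longleftrightarrow> Q z" by (rule c)
    fix d assume "\<forall>z. M z d \<longleftrightarrow> Q z" then show "d = c" by (rule u)
  qed
  then show ?thesis by blast
qed

definition emp where "emp = setof (\<lambda>z. False)"
definition upair where "upair a b = setof (\<lambda>z. z = a \<or> z = b)"
definition un where "un a b = setof (\<lambda>z. M z a \<or> M z b)"
definition suc where "suc x = un x (upair x x)"
definition kp where "kp a b = upair (upair a a) (upair a b)"
definition trp where "trp a b c = kp (kp a b) c"

lemma emp_ex: "\<exists>c. \<forall>z. M z c \<longleftrightarrow> False"
proof -
  obtain b where "\<forall>x. M x b \<longleftrightarrow> M x a \<and> dsat M (x ## e) p (DNeg (DEq (B 0) (B 0)))"
    using Sep[of "DNeg (DEq (B 0) (B 0))"] by fastforce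
  then show ?thesis by auto
qed

lemma M_emp[simp]: "\<not> M z emp"
  unfolding emp_def using M_setof[OF emp_ex] by blast

lemma emp_iff: "(\<forall>z. \<not> M z e) \<longleftrightarrow> e = emp"
  using ext M_emp by blast

lemma M_upair[simp]: "M z (upair a b) \<longleftrightarrow> z = a \<or> z = b"
  unfolding upair_def by (rule M_setof) (use ax_pair in blast)

lemma upair_iff: "(\<forall>z. M z c \<longleftrightarrow> z = a \<or> z = b) \<longleftrightarrow> c = upair a b"
  using ext M_upair by blast

lemma M_un[simp]: "M z (un a b) \<longleftrightarrow> M z a \<or> M z b"
proof -
  obtain c where c: "\<forall>x. M x c \<longleftrightarrow> (\<exists>y. M y (upair a b) \<and> M x y)" using ax_union by blast
  then have "\<forall>z. M z c \<longleftrightarrow> M z a \<or> M z b" by auto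
  then show ?thesis unfolding un_def by (intro M_setof) blast
qed

lemma M_suc[simp]: "M z (suc x) \<longleftrightarrow> M z x \<or> z = x"
  unfolding suc_def by auto

lemma suc_iff: "(\<forall>z. M z s \<longleftrightarrow> M z x \<or> z = x) \<longleftrightarrow> s = suc x"
  using ext M_suc by blast

lemma upair_eq: "upair a b = upair c d \<longleftrightarrow> (a = c \<and> b = d) \<or> (a = d \<and> b = c)"
proof
  assume "upair a b = upair c d"
  then have "\<forall>z. M z (upair a b) \<longleftrightarrow> M z (upair c d)" by simp
  then have H: "\<forall>z. (z = a \<or> z = b) \<longleftrightarrow> (z = c \<or> z = d)" by simp
  show "(a = c \<and> b = d) \<or> (a = d \<and> b = c)"
    using H[rule_format, of a] H[rule_format, of b] H[rule_format, of c] H[rule_format, of d] by auto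
next
  assume "(a = c \<and> b = d) \<or> (a = d \<and> b = c)"
  moreover have "upair d c = upair c d" by (rule ext) auto
  ultimately show "upair a b = upair c d" by auto
qed

lemma kp_inj: "kp a b = kp c d \<longleftrightarrow> a = c \<and> b = d"
  unfolding kp_def upair_eq by auto

lemma trp_inj: "trp a b c = trp a' b' c' \<longleftrightarrow> a = a' \<and> b = b' \<and> c = c'"
  unfolding trp_def kp_inj by auto

lemma suc_neq_emp[simp]: "suc x \<noteq> emp" "emp \<noteq> suc x"
proof -
  have "M x (suc x)" by simp
  then show "suc x \<noteq> emp" "emp \<noteq> suc x" using M_emp[of x] by metis+
qed

lemma found: "M x a \<Longrightarrow> \<exists>x. M x a \<and> \<not> (\<exists>y. M y x \<and> M y a)"
  using ax_found by blast

lemma suc_inj[simp]: "suc x = suc y \<longleftrightarrow> x = y"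
proof
  assume h: "suc x = suc y"
  show "x = y"
  proof (rule ccontr)
    assume ne: "x \<noteq> y"
    have "M x (suc y)" unfolding h[symmetric] by simp
    then have xy: "M x y" using ne by simp
    have "M y (suc x)" unfolding h by simp
    then have yx: "M y x" using ne by simp
    obtain m where "M m (upair x y)" "\<not> (\<exists>z. M z m \<and> M z (upair x y))"
      using found[of x "upair x y"] by auto
    then show False using xy yx by auto
  qed
qed simp

end



definition "isEmpD t = DAll (DNeg (DMem (B 0) (lift t)))"
definition "isSucD s x = DAll (DIff (DMem (B 0) (lift s)) (DOr (DMem (B 0) (lift x)) (DEq (B 0) (lift x))))"
definition "IndD w = DConj (DEx (DConj (DMem (B 0) (lift w)) (isEmpD (B 0))))
   (DAll (DImp (DMem (B 0) (lift w)) (DEx (DConj (DMem (B 0) (lift (lift w))) (isSucD (B 0) (B 1))))))"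

lemma cl_macros[simp]: "cl d (isEmpD t) = tcl d t" "cl d (isSucD s x) = (tcl d s \<and> tcl d x)"
  "cl d (IndD w) = tcl d w"
  by (auto simp: isEmpD_def isSucD_def IndD_def)
lemma pars_macros[simp]: "pars (isEmpD t) = tpars t" "pars (isSucD s x) = tpars s \<union> tpars x"
  "pars (IndD w) = tpars w"
  by (auto simp: isEmpD_def isSucD_def IndD_def)

context spot begin

lemma dsat_isEmpD[simp]: "dsat M e p (isEmpD t) \<longleftrightarrow> ev e p t = emp"
  using emp_iff by (auto simp: isEmpD_def)
lemma dsat_isSucD[simp]: "dsat M e p (isSucD s x) \<longleftrightarrow> ev e p s = suc (ev e p x)"
  using suc_iff[of "ev e p s" "ev e p x"] by (auto simp: isSucD_def)

lemma ind_iff: "inductive_set_zf M w \<longleftrightarrow> M emp w \<and> (\<forall>x. M x w \<longrightarrow> M (suc x) w)"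
  unfolding inductive_set_zf_def emp_iff suc_iff by auto

lemma dsat_IndD[simp]: "dsat M e p (IndD w) \<longleftrightarrow> inductive_set_zf M (ev e p w)"
  unfolding ind_iff IndD_def by auto

definition "minind w \<longleftrightarrow> inductive_set_zf M w \<and> (\<forall>z. inductive_set_zf M z \<longrightarrow> (\<forall>x. M x w \<longrightarrow> M x z))"

lemma minind_ex: "\<exists>w. minind w"
proof -
  obtain w0 where w0: "inductive_set_zf M w0" using ax_inf by blast
  obtain n0 where n0: "\<forall>x. M x n0 \<longleftrightarrow> M x w0 \<and> dsat M (x ## e) p (DAll (DImp (IndD (B 0)) (DMem (B 1) (B 0))))"
    using Sep[of "DAll (DImp (IndD (B 0)) (DMem (B 1) (B 0)))"] by fastforce
  then have n0': "\<forall>x. M x n0 \<longleftrightarrow> M x w0 \<and> (\<forall>z. inductive_set_zf M z \<longrightarrow> M x z)" by simp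
  have w0': "M emp w0" "\<And>x. M x w0 \<Longrightarrow> M (suc x) w0" using w0 unfolding ind_iff by auto
  have "M emp n0" using n0' w0' unfolding ind_iff by auto
  moreover have "M (suc x) n0" if "M x n0" for x using n0' w0' that unfolding ind_iff by auto
  ultimately have "inductive_set_zf M n0" unfolding ind_iff by blast
  moreover have "\<forall>z. inductive_set_zf M z \<longrightarrow> (\<forall>x. M x n0 \<longrightarrow> M x z)" using n0' by blast
  ultimately show ?thesis unfolding minind_def by blast
qed

lemma minind_uniq: assumes "minind w1" "minind w2" shows "w1 = w2"
proof (rule ext)
  fix z
  have i: "inductive_set_zf M w1" "inductive_set_zf M w2" using assms unfolding minind_def by auto
  have m1: "\<forall>z. inductive_set_zf M z \<longrightarrow> (\<forall>x. M x w1 \<longrightarrow> M x z)" using assms(1) unfolding minind_def by (elim conjE)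
  have m2: "\<forall>z. inductive_set_zf M z \<longrightarrow> (\<forall>x. M x w2 \<longrightarrow> M x z)" using assms(2) unfolding minind_def by (elim conjE)
  show "M z w1 \<longleftrightarrow> M z w2" using m1[rule_format, OF i(2)] m2[rule_format, OF i(1)] by blast
qed

lemma minind_N: "minind N"
proof -
  obtain w where w: "minind w" using minind_ex by blast
  have "nat_zf M = w" unfolding nat_zf_def minind_def[symmetric]
    by (rule the_equality) (use w minind_uniq in auto)
  then show ?thesis using w by simp
qed

lemma N_ind: "inductive_set_zf M N" using minind_N minind_def by blast
lemma emp_N[simp]: "M emp N" using N_ind ind_iff by blast
lemma suc_N[simp]: "M x N \<Longrightarrow> M (suc x) N" using N_ind ind_iff by blast
lemma N_min: "inductive_set_zf M z \<Longrightarrow> M x N \<Longrightarrow> M x z" using minind_N minind_def by blast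

lemma nat_induct_df:
  assumes cl: "cl 1 f" and sem: "\<forall>x. dsat M (x ## e) p f = Q x"
    and base: "Q emp" and step: "\<forall>x. M x N \<longrightarrow> Q x \<longrightarrow> Q (suc x)" and x: "M x N"
  shows "Q x"
proof -
  obtain D where D: "\<forall>x. M x D \<longleftrightarrow> M x N \<and> dsat M (x ## e) p f" using Sep[OF cl] by blast
  then have D': "\<forall>x. M x D \<longleftrightarrow> M x N \<and> Q x" using sem by simp
  have "inductive_set_zf M D" unfolding ind_iff using D' base step by auto
  then show ?thesis using N_min x D' by blast
qed

lemma st_N: "st N"
proof (rule TransferUniq[where f = "DConj (IndD (B 0)) (DAll (DImp (IndD (B 0)) (DAll (DImp (DMem (B 0) (B 2)) (DMem (B 0) (B 1))))))" and e = e and p = p])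
  show "dsat M (N ## e) p (DConj (IndD (B 0)) (DAll (DImp (IndD (B 0)) (DAll (DImp (DMem (B 0) (B 2)) (DMem (B 0) (B 1)))))))"
    using minind_N unfolding minind_def by simp
  fix y assume "dsat M (y ## e) p (DConj (IndD (B 0)) (DAll (DImp (IndD (B 0)) (DAll (DImp (DMem (B 0) (B 2)) (DMem (B 0) (B 1)))))))"
  then have "minind y" unfolding minind_def by simp
  then show "y = N" using minind_uniq minind_N by blast
qed auto

lemma st_emp: "st emp"
proof (rule TransferUniq[where f = "isEmpD (B 0)" and e = e and p = p])
qed auto

end



definition "isUpD z a b = DAll (DIff (DMem (B 0) (lift z)) (DOr (DEq (B 0) (lift a)) (DEq (B 0) (lift b))))"
definition "isKpD q a b = DAll (DIff (DMem (B 0) (lift q)) (DOr (isUpD (B 0) (lift a) (lift a)) (isUpD (B 0) (lift a) (lift b))))"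
definition "isTrD t a b c = DEx (DConj (isKpD (B 0) (lift a) (lift b)) (isKpD (lift t) (B 0) (lift c)))"
definition "TrInD a b c F = DEx (DConj (isTrD (B 0) (lift a) (lift b) (lift c)) (DMem (B 0) (lift F)))"

definition "RelD nT bf rf s t u = DEx (DConj (TrInD (lift s) (lift t) (lift u) (B 0))
   (DAll (DImp (DMem (B 0) (B 1)) (DEx (DEx (DEx (
      DConj (isTrD (B 3) (B 2) (B 1) (B 0))
     (DConj (DMem (B 2) (lift (lift (lift (lift (lift nT))))))
     (DConj (DMem (B 1) (lift (lift (lift (lift (lift nT))))))
     (DConj (DMem (B 0) (lift (lift (lift (lift (lift nT))))))
      (DOr bf (DEx (DEx (DEx (DConj (TrInD (B 2) (B 1) (B 0) (B 7)) rf)))))))))))))))"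

lemma cl_macros2[simp]: "cl d (isUpD z a b) = (tcl d z \<and> tcl d a \<and> tcl d b)"
  "cl d (isKpD q a b) = (tcl d q \<and> tcl d a \<and> tcl d b)"
  "cl d (isTrD t a b c) = (tcl d t \<and> tcl d a \<and> tcl d b \<and> tcl d c)"
  "cl d (TrInD a b c F) = (tcl d a \<and> tcl d b \<and> tcl d c \<and> tcl d F)"
  by (auto simp: isUpD_def isKpD_def isTrD_def TrInD_def)
lemma pars_macros2[simp]: "pars (isUpD z a b) = tpars z \<union> tpars a \<union> tpars b"
  "pars (isKpD q a b) = tpars q \<union> tpars a \<union> tpars b"
  "pars (isTrD t a b c) = tpars t \<union> tpars a \<union> tpars b \<union> tpars c"
  "pars (TrInD a b c F) = tpars a \<union> tpars b \<union> tpars c \<union> tpars F"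
  by (auto simp: isUpD_def isKpD_def isTrD_def TrInD_def)

lemma cl_mono: "cl d f \<Longrightarrow> d \<le> d' \<Longrightarrow> cl d' f"
proof (induction f arbitrary: d d')
  case (DMem s t) then show ?case by (cases s; cases t) auto
next
  case (DEq s t) then show ?case by (cases s; cases t) auto
qed auto

lemma cl_RelD[simp]: "cl 3 bf \<Longrightarrow> cl 6 rf \<Longrightarrow> cl d (RelD nT bf rf s t u) = (tcl d nT \<and> tcl d s \<and> tcl d t \<and> tcl d u)"
  unfolding RelD_def using cl_mono[of 3 bf] cl_mono[of 6 rf] by auto
lemma pars_RelD[simp]: "pars (RelD nT bf rf s t u) = tpars nT \<union> tpars s \<union> tpars t \<union> tpars u \<union> pars bf \<union> pars rf"
  unfolding RelD_def by auto

context spot begin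

lemma dsat_isUpD[simp]: "dsat M e p (isUpD z a b) \<longleftrightarrow> ev e p z = upair (ev e p a) (ev e p b)"
  using upair_iff by (auto simp: isUpD_def)
lemma dsat_isKpD[simp]: "dsat M e p (isKpD q a b) \<longleftrightarrow> ev e p q = kp (ev e p a) (ev e p b)"
  using upair_iff by (auto simp: isKpD_def kp_def)
lemma dsat_isTrD[simp]: "dsat M e p (isTrD t a b c) \<longleftrightarrow> ev e p t = trp (ev e p a) (ev e p b) (ev e p c)"
  by (auto simp: isTrD_def trp_def)
lemma dsat_TrInD[simp]: "dsat M e p (TrInD a b c F) \<longleftrightarrow> M (trp (ev e p a) (ev e p b) (ev e p c)) (ev e p F)"
  by (auto simp: TrInD_def)

definition "RelF bs rs F \<longleftrightarrow> (\<forall>t. M t F \<longrightarrow> (\<exists>x y z. t = trp x y z \<and> M x N \<and> M y N \<and> M z N \<and>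
      (bs x y z \<or> (\<exists>x' y' z'. M (trp x' y' z') F \<and> rs x' y' z' x y z))))"
definition "Rel bs rs a b c \<longleftrightarrow> (\<exists>F. M (trp a b c) F \<and> RelF bs rs F)"

lemma Rel_base: "bs x y z \<Longrightarrow> M x N \<Longrightarrow> M y N \<Longrightarrow> M z N \<Longrightarrow> Rel bs rs x y z"
  unfolding Rel_def RelF_def by (rule exI[of _ "upair (trp x y z) (trp x y z)"]) auto

lemma Rel_step: assumes "Rel bs rs x' y' z'" "rs x' y' z' x y z" "M x N" "M y N" "M z N"
  shows "Rel bs rs x y z"
proof -
  obtain F where F: "M (trp x' y' z') F" "RelF bs rs F" using assms(1) Rel_def by blast
  define G where "G = un F (upair (trp x y z) (trp x y z))"
  have "RelF bs rs G"
    unfolding RelF_def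
  proof (intro allI impI)
    fix t assume "M t G"
    then have "M t F \<or> t = trp x y z" by (simp add: G_def)
    then show "\<exists>x y z. t = trp x y z \<and> M x N \<and> M y N \<and> M z N \<and>
      (bs x y z \<or> (\<exists>x' y' z'. M (trp x' y' z') G \<and> rs x' y' z' x y z))"
    proof
      assume "M t F"
      then obtain a b c where abc: "t = trp a b c" "M a N" "M b N" "M c N"
        "bs a b c \<or> (\<exists>x' y' z'. M (trp x' y' z') F \<and> rs x' y' z' a b c)"
        using F(2) unfolding RelF_def by blast
      have "bs a b c \<or> (\<exists>x' y' z'. M (trp x' y' z') G \<and> rs x' y' z' a b c)"
        using abc(5) unfolding G_def by auto
      then show ?thesis using abc(1-4) by blast
    next
      assume "t = trp x y z"
      moreover have "M (trp x' y' z') G" using F(1) unfolding G_def by simp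
      ultimately show ?thesis using assms(2-5) by blast
    qed
  qed
  moreover have "M (trp x y z) G" by (simp add: G_def)
  ultimately show ?thesis unfolding Rel_def by blast
qed

lemma Rel_inv: assumes "Rel bs rs x y z"
  shows "M x N \<and> M y N \<and> M z N \<and> (bs x y z \<or> (\<exists>x' y' z'. Rel bs rs x' y' z' \<and> rs x' y' z' x y z))"
proof -
  obtain F where F: "M (trp x y z) F" "RelF bs rs F" using assms Rel_def by blast
  then obtain a b c where abc: "trp x y z = trp a b c" "M a N" "M b N" "M c N"
        "bs a b c \<or> (\<exists>x' y' z'. M (trp x' y' z') F \<and> rs x' y' z' a b c)"
    unfolding RelF_def by blast
  then have "x = a" "y = b" "z = c" using trp_inj by auto
  then show ?thesis using abc F unfolding Rel_def by blast
qed

lemma dsat_RelD: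
  assumes "cl 3 bf" "cl 6 rf" "ev e p nT = N"
  shows "dsat M e p (RelD nT bf rf s t u) \<longleftrightarrow>
    Rel (\<lambda>x y z. dsat M (z ## y ## x ## e) p bf) (\<lambda>x' y' z' x y z. dsat M (z' ## y' ## x' ## z ## y ## x ## e) p rf)
      (ev e p s) (ev e p t) (ev e p u)"
proof -
  have cb: "dsat M (z ## y ## x ## ea) p bf = dsat M (z ## y ## x ## eb) p bf" for x y z ea eb
    by (rule dsat_cong[OF assms(1)]) (auto simp: less_Suc_eq numeral_3_eq_3)
  have cr: "dsat M (z' ## y' ## x' ## z ## y ## x ## ea) p rf = dsat M (z' ## y' ## x' ## z ## y ## x ## eb) p rf"
    for x y z x' y' z' ea eb
    by (rule dsat_cong[OF assms(2)]) (auto simp: less_Suc_eq numeral_eq_Suc)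
  show ?thesis
    unfolding RelD_def Rel_def RelF_def
    apply (simp add: assms(3))
    apply (subst cb[where eb = e])
    apply (subst cr[where eb = e])
    apply blast
    done
qed

end



definition "baseD = DConj (isEmpD (B 2)) (DConj (isEmpD (B 1)) (isEmpD (B 0)))"
definition "ruleDf = DConj (isSucD (B 3) (B 0)) (DOr (DConj (isSucD (B 5) (B 2)) (DEq (B 4) (B 1))) (DConj (DEq (B 5) (B 2)) (isSucD (B 4) (B 1))))"
definition "ruleCf = DConj (isSucD (B 3) (B 0)) (DOr (DConj (isSucD (B 1) (B 4)) (isSucD (B 5) (B 2))) (DConj (isEmpD (B 1)) (DConj (isEmpD (B 5)) (isSucD (B 4) (B 2)))))"
definition "DD nT s t u = RelD nT baseD ruleDf s t u"
definition "CD nT s t u = RelD nT baseD ruleCf s t u"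

lemma cl_base[simp]: "cl 3 baseD" "cl 6 ruleDf" "cl 6 ruleCf" by (auto simp: baseD_def ruleDf_def ruleCf_def)
lemma pars_base[simp]: "pars baseD = {}" "pars ruleDf = {}" "pars ruleCf = {}" by (auto simp: baseD_def ruleDf_def ruleCf_def)

lemma cl_DD[simp]: "cl d (DD nT s t u) = (tcl d nT \<and> tcl d s \<and> tcl d t \<and> tcl d u)"
  "cl d (CD nT s t u) = (tcl d nT \<and> tcl d s \<and> tcl d t \<and> tcl d u)"
  by (simp_all add: DD_def CD_def)
lemma pars_DD[simp]: "pars (DD nT s t u) = tpars nT \<union> tpars s \<union> tpars t \<union> tpars u"
  "pars (CD nT s t u) = tpars nT \<union> tpars s \<union> tpars t \<union> tpars u"
  by (simp_all add: DD_def CD_def)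

context spot begin

definition "bH x y z \<longleftrightarrow> x = emp \<and> y = emp \<and> z = emp"
definition "rD x' y' z' x y z \<longleftrightarrow> z = suc z' \<and> ((x = suc x' \<and> y = y') \<or> (x = x' \<and> y = suc y'))"
definition "rC x' y' z' x y z \<longleftrightarrow> z = suc z' \<and> ((y' = suc y \<and> x = suc x') \<or> (y' = emp \<and> x = emp \<and> y = suc x'))"
abbreviation "Dr \<equiv> Rel bH rD"
abbreviation "Cr \<equiv> Rel bH rC"

lemma dsat_DD[simp]: "ev e p nT = N \<Longrightarrow> dsat M e p (DD nT s t u) = Dr (ev e p s) (ev e p t) (ev e p u)"
proof -
  assume n: "ev e p nT = N"
  have 1: "(\<lambda>x y z. dsat M (z ## y ## x ## e) p baseD) = bH"
    by (auto simp: fun_eq_iff bH_def baseD_def)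
  have 2: "(\<lambda>x' y' z' x y z. dsat M (z' ## y' ## x' ## z ## y ## x ## e) p ruleDf) = rD"
    by (auto simp: fun_eq_iff rD_def ruleDf_def)
  show ?thesis unfolding DD_def dsat_RelD[OF cl_base(1) cl_base(2) n] 1 2 ..
qed

lemma dsat_CD[simp]: "ev e p nT = N \<Longrightarrow> dsat M e p (CD nT s t u) = Cr (ev e p s) (ev e p t) (ev e p u)"
proof -
  assume n: "ev e p nT = N"
  have 1: "(\<lambda>x y z. dsat M (z ## y ## x ## e) p baseD) = bH"
    by (auto simp: fun_eq_iff bH_def baseD_def)
  have 2: "(\<lambda>x' y' z' x y z. dsat M (z' ## y' ## x' ## z ## y ## x ## e) p ruleCf) = rC"
    by (auto simp: fun_eq_iff rC_def ruleCf_def)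
  show ?thesis unfolding CD_def dsat_RelD[OF cl_base(1) cl_base(3) n] 1 2 ..
qed

lemma Dr_N: "Dr x y z \<Longrightarrow> M x N \<and> M y N \<and> M z N" using Rel_inv by blast
lemma Cr_N: "Cr x y z \<Longrightarrow> M x N \<and> M y N \<and> M z N" using Rel_inv by blast

lemma Dr_0s: "M s N \<Longrightarrow> Dr emp s s"
  apply (rule nat_induct_df[where f = "DD (P 0) (P 1) (B 0) (B 0)" and p = "\<lambda>j. [N, emp] ! j"
        and e = "\<lambda>_. emp" and Q = "\<lambda>s. Dr emp s s"])
      apply simp_all
   apply (rule Rel_base) apply (simp_all add: bH_def)
  apply (intro allI impI)
  subgoal for x by (rule Rel_step[of _ _ emp x x]) (auto simp: rD_def)
  done

lemma Dr_s0: "M s N \<Longrightarrow> Dr s emp s"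
  apply (rule nat_induct_df[where f = "DD (P 0) (B 0) (P 1) (B 0)" and p = "\<lambda>j. [N, emp] ! j"
        and e = "\<lambda>_. emp" and Q = "\<lambda>s. Dr s emp s"])
      apply simp_all
   apply (rule Rel_base) apply (simp_all add: bH_def)
  apply (intro allI impI)
  subgoal for x by (rule Rel_step[of _ _ x emp x]) (auto simp: rD_def)
  done


lemma Dr_tot: "M a N \<Longrightarrow> \<forall>b. M b N \<longrightarrow> (\<exists>s. Dr a b s)"
  apply (rule nat_induct_df[where f = "DAll (DImp (DMem (B 0) (P 0)) (DEx (DD (P 0) (B 2) (B 1) (B 0))))"
        and p = "\<lambda>j. [N, emp] ! j" and e = "\<lambda>_. emp" and Q = "\<lambda>a. \<forall>b. M b N \<longrightarrow> (\<exists>s. Dr a b s)"])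
      apply simp_all
   apply (metis Dr_0s)
proof (intro allI impI)
  fix a b assume a: "M a N" and IH: "\<forall>b. M b N \<longrightarrow> (\<exists>s. Dr a b s)" and b: "M b N"
  obtain s where s: "Dr a b s" using IH b by blast
  then have "Dr (suc a) b (suc s)" by (rule Rel_step) (use a b Dr_N[OF s] in \<open>auto simp: rD_def\<close>)
  then show "\<exists>s. Dr (suc a) b s" by blast
qed

lemma Dr_0inv: "M s N \<Longrightarrow> \<forall>b. Dr emp b s \<longrightarrow> b = s"
  apply (rule nat_induct_df[where f = "DAll (DImp (DD (P 0) (P 1) (B 0) (B 1)) (DEq (B 0) (B 1)))"
        and p = "\<lambda>j. [N, emp] ! j" and e = "\<lambda>_. emp" and Q = "\<lambda>s. \<forall>b. Dr emp b s \<longrightarrow> b = s"])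
      apply simp
     apply simp
    prefer 3 apply simp
   apply (intro allI impI)
  subgoal for b using Rel_inv[of bH rD emp b emp] by (auto simp: bH_def rD_def)
proof (intro allI impI)
  fix s b assume s: "M s N" and IH: "\<forall>b. Dr emp b s \<longrightarrow> b = s" and h: "Dr emp b (suc s)"
  from Rel_inv[OF h] obtain x' y' z' where "Dr x' y' z'" "rD x' y' z' emp b (suc s)"
    by (auto simp: bH_def)
  then show "b = suc s" using IH by (auto simp: rD_def)
qed

lemma Dr_shift: "M s N \<Longrightarrow> \<forall>a b. Dr (suc a) b s \<longrightarrow> Dr a (suc b) s"
  apply (rule nat_induct_df[where f = "DAll (DAll (DImp (DEx (DConj (isSucD (B 0) (B 2)) (DD (P 0) (B 0) (B 1) (B 3))))
      (DEx (DConj (isSucD (B 0) (B 1)) (DD (P 0) (B 2) (B 0) (B 3))))))"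
        and p = "\<lambda>j. [N, emp] ! j" and e = "\<lambda>_. emp" and Q = "\<lambda>s. \<forall>a b. Dr (suc a) b s \<longrightarrow> Dr a (suc b) s"])
      apply simp
     apply simp
    prefer 3 apply simp
   apply (intro allI impI)
  subgoal for a b using Rel_inv[of bH rD "suc a" b emp] by (auto simp: bH_def rD_def)
proof (intro allI impI)
  fix s a b assume s: "M s N" and IH: "\<forall>a b. Dr (suc a) b s \<longrightarrow> Dr a (suc b) s" and h: "Dr (suc a) b (suc s)"
  from Rel_inv[OF h] obtain x' y' z' where r: "Dr x' y' z'" "rD x' y' z' (suc a) b (suc s)"
    and bN: "M b N" by (auto simp: bH_def)
  then have zs: "z' = s" by (simp add: rD_def)
  show "Dr a (suc b) (suc s)"
  proof (cases "suc a = suc x' \<and> b = y'")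
    case True
    then have ab: "Dr a b s" using r zs by simp
    show ?thesis by (rule Rel_step[OF ab]) (use Dr_N[OF ab] s in \<open>auto simp: rD_def\<close>)
  next
    case False
    then have "x' = suc a" "b = suc y'" using r by (auto simp: rD_def)
    then have "Dr (suc a) y' s" using r zs by simp
    then have ab: "Dr a (suc y') s" using IH by blast
    show ?thesis by (rule Rel_step[OF ab]) (use Dr_N[OF ab] s bN \<open>b = suc y'\<close> in \<open>auto simp: rD_def\<close>)
  qed
qed

lemma Cr_inj: "M c N \<Longrightarrow> \<forall>a b a' b'. Cr a b c \<longrightarrow> Cr a' b' c \<longrightarrow> a = a' \<and> b = b'"
  apply (rule nat_induct_df[where f = "DAll (DAll (DAll (DAll (DImp (CD (P 0) (B 3) (B 2) (B 4))
      (DImp (CD (P 0) (B 1) (B 0) (B 4)) (DConj (DEq (B 3) (B 1)) (DEq (B 2) (B 0))))))))"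
        and p = "\<lambda>j. [N, emp] ! j" and e = "\<lambda>_. emp" and Q = "\<lambda>c. \<forall>a b a' b'. Cr a b c \<longrightarrow> Cr a' b' c \<longrightarrow> a = a' \<and> b = b'"])
      apply simp
     apply simp
    prefer 3 apply simp
   apply (intro allI impI)
  subgoal for a b a' b' using Rel_inv[of bH rC a b emp] Rel_inv[of bH rC a' b' emp] by (auto simp: bH_def rC_def)
proof (intro allI impI)
  fix c a b a' b' assume IH: "\<forall>a b a' b'. Cr a b c \<longrightarrow> Cr a' b' c \<longrightarrow> a = a' \<and> b = b'"
    and h1: "Cr a b (suc c)" and h2: "Cr a' b' (suc c)"
  from Rel_inv[OF h1] obtain x1 y1 z1 where r1: "Cr x1 y1 z1" "rC x1 y1 z1 a b (suc c)"
    by (auto simp: bH_def)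
  from Rel_inv[OF h2] obtain x2 y2 z2 where r2: "Cr x2 y2 z2" "rC x2 y2 z2 a' b' (suc c)"
    by (auto simp: bH_def)
  have "z1 = c" "z2 = c" using r1 r2 by (auto simp: rC_def)
  then have "x1 = x2 \<and> y1 = y2" using IH r1 r2 by blast
  then show "a = a' \<and> b = b'" using r1(2) r2(2) by (auto simp: rC_def)
qed

lemma Cr_fun: "M c N \<Longrightarrow> \<forall>a b c'. Cr a b c \<longrightarrow> Cr a b c' \<longrightarrow> c = c'"
  apply (rule nat_induct_df[where f = "DAll (DAll (DAll (DImp (CD (P 0) (B 2) (B 1) (B 3))
      (DImp (CD (P 0) (B 2) (B 1) (B 0)) (DEq (B 3) (B 0))))))"
        and p = "\<lambda>j. [N, emp] ! j" and e = "\<lambda>_. emp" and Q = "\<lambda>c. \<forall>a b c'. Cr a b c \<longrightarrow> Cr a b c' \<longrightarrow> c = c'"])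
      apply simp
     apply simp
    prefer 3 apply simp
   apply (intro allI impI)
  subgoal for a b c' using Rel_inv[of bH rC a b emp] Rel_inv[of bH rC a b c'] by (auto simp: bH_def rC_def)
proof (intro allI impI)
  fix c a b c' assume IH: "\<forall>a b c'. Cr a b c \<longrightarrow> Cr a b c' \<longrightarrow> c = c'"
    and h1: "Cr a b (suc c)" and h2: "Cr a b c'"
  from Rel_inv[OF h1] obtain x1 y1 z1 where r1: "Cr x1 y1 z1" "rC x1 y1 z1 a b (suc c)"
    by (auto simp: bH_def)
  have ne: "\<not> (a = emp \<and> b = emp)" using r1(2) by (auto simp: rC_def)
  from Rel_inv[OF h2] ne obtain x2 y2 z2 where r2: "Cr x2 y2 z2" "rC x2 y2 z2 a b c'"
    by (auto simp: bH_def)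
  have "x1 = x2 \<and> y1 = y2" using r1(2) r2(2) by (auto simp: rC_def)
  moreover have "z1 = c" using r1 by (auto simp: rC_def)
  ultimately have "c = z2" using IH r1(1) r2(1) by blast
  then show "suc c = c'" using r2(2) by (auto simp: rC_def)
qed

lemma Ctot_inner: assumes s: "M s N" and h0: "\<exists>c. Cr emp s c"
  shows "M a N \<Longrightarrow> \<forall>b. Dr a b s \<longrightarrow> (\<exists>c. Cr a b c)"
  apply (rule nat_induct_df[where f = "DAll (DImp (DD (P 0) (B 1) (B 0) (P 1)) (DEx (CD (P 0) (B 2) (B 1) (B 0))))"
        and p = "\<lambda>j. [N, s] ! j" and e = "\<lambda>_. emp" and Q = "\<lambda>a. \<forall>b. Dr a b s \<longrightarrow> (\<exists>c. Cr a b c)"])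
      apply simp
     apply simp
    prefer 3 apply simp
   apply (intro allI impI)
  subgoal for b using Dr_0inv[OF s] h0 by blast
proof (intro allI impI)
  fix a b assume a: "M a N" and IH: "\<forall>b. Dr a b s \<longrightarrow> (\<exists>c. Cr a b c)" and h: "Dr (suc a) b s"
  have "Dr a (suc b) s" using Dr_shift[OF s] h by blast
  then obtain c where c: "Cr a (suc b) c" using IH by blast
  have "Cr (suc a) b (suc c)" by (rule Rel_step[OF c]) (use Cr_N[OF c] Dr_N[OF h] in \<open>auto simp: rC_def\<close>)
  then show "\<exists>c. Cr (suc a) b c" by blast
qed

lemma Ctot_outer: "M s N \<Longrightarrow> \<exists>c. Cr emp s c"
  apply (rule nat_induct_df[where f = "DEx (CD (P 0) (P 1) (B 1) (B 0))"
        and p = "\<lambda>j. [N, emp] ! j" and e = "\<lambda>_. emp" and Q = "\<lambda>s. \<exists>c. Cr emp s c"])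
      apply simp_all
   apply (rule exI[of _ emp], rule Rel_base) apply (simp_all add: bH_def)
proof (intro allI impI)
  fix s assume s: "M s N" and IH: "\<exists>c. Cr emp s c"
  obtain c where c: "Cr s emp c" using Ctot_inner[OF s IH s] Dr_s0[OF s] by blast
  have "Cr emp (suc s) (suc c)" by (rule Rel_step[OF c]) (use Cr_N[OF c] in \<open>auto simp: rC_def\<close>)
  then show "\<exists>c. Cr emp (suc s) c" by blast
qed

lemma Ctot: "M a N \<Longrightarrow> M b N \<Longrightarrow> \<exists>c. Cr a b c"
proof -
  assume a: "M a N" and b: "M b N"
  obtain s where s: "Dr a b s" using Dr_tot[OF a] b by blast
  have sN: "M s N" using Dr_N[OF s] by blast
  show ?thesis using Ctot_inner[OF sN Ctot_outer[OF sN] a] s by blast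
qed

end



context spot begin

definition "cp a b = (THE c. Cr a b c)"

lemma cp_Cr: "M a N \<Longrightarrow> M b N \<Longrightarrow> Cr a b (cp a b)"
proof -
  assume a: "M a N" and b: "M b N"
  obtain c where c: "Cr a b c" using Ctot[OF a b] by blast
  have u: "d = c" if "Cr a b d" for d
    using Cr_fun[of c] Cr_N[OF c] c that by metis
  show ?thesis unfolding cp_def by (rule theI[of _ c]) (use c u in blast)+
qed

lemma Cr_iff: "Cr a b c \<longleftrightarrow> M a N \<and> M b N \<and> c = cp a b"
proof
  assume c: "Cr a b c"
  then have n: "M a N" "M b N" "M c N" using Cr_N by auto
  have "c = cp a b" using Cr_fun[OF n(3)] c cp_Cr[OF n(1,2)] by blast
  then show "M a N \<and> M b N \<and> c = cp a b" using n by blast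
next
  assume "M a N \<and> M b N \<and> c = cp a b"
  then show "Cr a b c" using cp_Cr by blast
qed

lemma cp_N: "M a N \<Longrightarrow> M b N \<Longrightarrow> M (cp a b) N"
  using cp_Cr Cr_N by blast

lemma cp_inj: "M a N \<Longrightarrow> M b N \<Longrightarrow> M a' N \<Longrightarrow> M b' N \<Longrightarrow> cp a b = cp a' b' \<Longrightarrow> a = a' \<and> b = b'"
  using Cr_inj[of "cp a b"] cp_Cr cp_N by metis

lemma st_cp: assumes "st a" "st b" "M a N" "M b N" shows "st (cp a b)"
proof (rule TransferUniq[where f = "CD (P 0) (P 1) (P 2) (B 0)" and p = "\<lambda>j. [N, a, b] ! j" and e = "\<lambda>_. emp"])
  show "\<forall>j\<in>pars (CD (P 0) (P 1) (P 2) (B 0)). st ([N, a, b] ! j)"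
    using assms st_N by (auto simp: nth_Cons')
  show "dsat M (cp a b ## (\<lambda>_. emp)) (\<lambda>j. [N, a, b] ! j) (CD (P 0) (P 1) (P 2) (B 0))"
    using cp_Cr assms by simp
  fix y assume "dsat M (y ## (\<lambda>_. emp)) (\<lambda>j. [N, a, b] ! j) (CD (P 0) (P 1) (P 2) (B 0))"
  then show "y = cp a b" using Cr_iff by simp
qed simp

definition "code xs = foldl cp emp xs"

lemma code_snoc[simp]: "code (xs @ [x]) = cp (code xs) x" by (simp add: code_def)
lemma code_Nil[simp]: "code [] = emp" by (simp add: code_def)

lemma code_N: "\<forall>x\<in>set xs. M x N \<Longrightarrow> M (code xs) N"
  by (induction xs rule: rev_induct) (auto intro: cp_N)

lemma code_st: "\<forall>x\<in>set xs. M x N \<and> st x \<Longrightarrow> st (code xs)"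
proof (induction xs rule: rev_induct)
  case Nil then show ?case using st_emp by simp
next
  case (snoc x xs)
  then show ?case using st_cp code_N by auto
qed

lemma code_inj: "length xs = length ys \<Longrightarrow> \<forall>x\<in>set xs. M x N \<Longrightarrow> \<forall>x\<in>set ys. M x N \<Longrightarrow> code xs = code ys \<Longrightarrow> xs = ys"
proof (induction xs arbitrary: ys rule: rev_induct)
  case Nil then show ?case by simp
next
  case (snoc x xs)
  then obtain ys' y where ys: "ys = ys' @ [y]" by (metis length_Suc_conv_rev length_append_singleton)
  have "code xs = code ys' \<and> x = y"
    using cp_inj[of "code xs" x "code ys'" y] snoc.prems ys code_N by auto
  then show ?case using snoc ys by auto
qed

end



lemma sat_agree: "(\<forall>v\<in>fv f. \<rho> v = \<rho>' v) \<Longrightarrow> sat M \<rho> f = sat M \<rho>' f"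
proof (induction f arbitrary: \<rho> \<rho>')
  case (Ex v f)
  have "sat M (\<rho>(v := a)) f = sat M (\<rho>'(v := a)) f" for a
    by (rule Ex.IH) (use Ex.prems in auto)
  then show ?case by simp
next
  case (Conj f g)
  have "sat M \<rho> f = sat M \<rho>' f" by (rule Conj.IH(1)) (use Conj.prems in auto)
  moreover have "sat M \<rho> g = sat M \<rho>' g" by (rule Conj.IH(2)) (use Conj.prems in auto)
  ultimately show ?case by simp
qed auto

lemma sat_fresh: "x \<notin> fv f \<Longrightarrow> sat M (\<rho>(x := a)) f = sat M \<rho> f"
  by (rule sat_agree) auto

lemma finite_fv: "finite (fv f)" by (induction f) auto

fun upd :: "(nat \<Rightarrow> 'u) \<Rightarrow> nat list \<Rightarrow> 'u list \<Rightarrow> nat \<Rightarrow> 'u" where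
  "upd \<rho> (v # vs) (x # xs) = upd (\<rho>(v := x)) vs xs"
| "upd \<rho> _ _ = \<rho>"

lemma upd_snoc: "length xs = length vs \<Longrightarrow> upd \<rho> (vs @ [u]) (xs @ [a]) = (upd \<rho> vs xs)(u := a)"
  by (induction \<rho> vs xs rule: upd.induct) auto

lemma upd_fresh: "y \<notin> set vs \<Longrightarrow> upd (\<rho>(y := a)) vs xs = (upd \<rho> vs xs)(y := a)"
  by (induction \<rho> vs xs rule: upd.induct) (auto simp: fun_upd_twist)

lemma upd_out: "y \<notin> set vs \<Longrightarrow> upd \<rho> vs xs y = \<rho> y"
  by (induction \<rho> vs xs rule: upd.induct) auto

definition "IsCp mb nN a b c = tr mb (\<lambda>j. [nN, a, b, c] ! j) 0 (CD (P 0) (P 1) (P 2) (P 3))"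

fun G :: "nat \<Rightarrow> nat \<Rightarrow> fm \<Rightarrow> nat \<Rightarrow> nat list \<Rightarrow> fm" where
  "G mx mb \<psi> k [] = Conj (Eq (mx + 1) (mx + 2 + k)) \<psi>"
| "G mx mb \<psi> k (v # vs) = Ex v (Ex (mx + 2 + Suc k)
     (Conj (IsCp mb mx (mx + 2 + k) v (mx + 2 + Suc k)) (G mx mb \<psi> (Suc k) vs)))"

context spot begin

lemma sat_IsCp: assumes "\<rho> nN = N" "nN < mb" "a < mb" "b < mb" "c < mb"
  shows "sat M \<rho> (IsCp mb nN a b c) = Cr (\<rho> a) (\<rho> b) (\<rho> c)"
proof -
  have "sat M \<rho> (IsCp mb nN a b c) = dsat M (\<lambda>_. emp) (\<lambda>j. \<rho> ([nN, a, b, c] ! j)) (CD (P 0) (P 1) (P 2) (P 3))"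
    unfolding IsCp_def by (rule tr_sat) (use assms in auto)
  then show ?thesis using assms by simp
qed

lemma sat_G:
  assumes "\<forall>v\<in>set vs. v < mx" "\<forall>v\<in>fv \<psi>. v < mx" "k + length vs \<le> L" "mb = mx + 3 + L"
    "\<rho> mx = N" "M (\<rho> (mx + 2 + k)) N"
  shows "sat M \<rho> (G mx mb \<psi> k vs) \<longleftrightarrow> (\<exists>xs. length xs = length vs \<and> (\<forall>x\<in>set xs. M x N) \<and>
      \<rho> (mx + 1) = foldl cp (\<rho> (mx + 2 + k)) xs \<and> sat M (upd \<rho> vs xs) \<psi>)"
  using assms
proof (induction vs arbitrary: k \<rho>)
  case Nil
  then show ?case by auto
next
  case (Cons v vs)
  let ?dk = "mx + 2 + k" and ?d' = "mx + 2 + Suc k"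
  have vlt: "v < mx" using Cons.prems by simp
  have step: "sat M (\<rho>(v := a, ?d' := d)) (G mx mb \<psi> (Suc k) vs) \<longleftrightarrow>
     (\<exists>xs. length xs = length vs \<and> (\<forall>x\<in>set xs. M x N) \<and>
      \<rho> (mx + 1) = foldl cp d xs \<and> sat M (upd (\<rho>(v := a)) vs xs) \<psi>)"
    if d: "M d N" for a d
  proof -
    have "sat M (\<rho>(v := a, ?d' := d)) (G mx mb \<psi> (Suc k) vs) \<longleftrightarrow>
     (\<exists>xs. length xs = length vs \<and> (\<forall>x\<in>set xs. M x N) \<and>
      (\<rho>(v := a, ?d' := d)) (mx + 1) = foldl cp ((\<rho>(v := a, ?d' := d)) ?d') xs \<and>
      sat M (upd (\<rho>(v := a, ?d' := d)) vs xs) \<psi>)"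
      by (rule Cons.IH) (use Cons.prems vlt d in auto)
    moreover have "(\<rho>(v := a, ?d' := d)) (mx + 1) = \<rho> (mx + 1)" using vlt by simp
    moreover have "sat M (upd (\<rho>(v := a, ?d' := d)) vs xs) \<psi> = sat M (upd (\<rho>(v := a)) vs xs) \<psi>" for xs
    proof -
      have "?d' \<notin> set vs" using Cons.prems by force
      then have "upd (\<rho>(v := a, ?d' := d)) vs xs = (upd (\<rho>(v := a)) vs xs)(?d' := d)" by (rule upd_fresh)
      moreover have "?d' \<notin> fv \<psi>" using Cons.prems by force
      ultimately show ?thesis by (simp add: sat_fresh)
    qed
    ultimately show ?thesis by simp
  qed
  have cp: "sat M (\<rho>(v := a, ?d' := d)) (IsCp mb mx ?dk v ?d') \<longleftrightarrow> Cr (\<rho> ?dk) a d" for a d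
  proof -
    have "sat M (\<rho>(v := a, ?d' := d)) (IsCp mb mx ?dk v ?d') =
      Cr ((\<rho>(v := a, ?d' := d)) ?dk) ((\<rho>(v := a, ?d' := d)) v) ((\<rho>(v := a, ?d' := d)) ?d')"
      by (rule sat_IsCp) (use Cons.prems vlt in auto)
    then show ?thesis using vlt by simp
  qed
  have "sat M \<rho> (G mx mb \<psi> k (v # vs)) \<longleftrightarrow>
    (\<exists>a d. Cr (\<rho> ?dk) a d \<and> sat M (\<rho>(v := a, ?d' := d)) (G mx mb \<psi> (Suc k) vs))"
    using cp by simp
  also have "\<dots> \<longleftrightarrow> (\<exists>a. M a N \<and> sat M (\<rho>(v := a, ?d' := cp (\<rho> ?dk) a)) (G mx mb \<psi> (Suc k) vs))"
    using Cr_iff Cons.prems(6) by (auto simp del: G.simps)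
  also have "\<dots> \<longleftrightarrow> (\<exists>a. M a N \<and> (\<exists>xs. length xs = length vs \<and> (\<forall>x\<in>set xs. M x N) \<and>
      \<rho> (mx + 1) = foldl cp (cp (\<rho> ?dk) a) xs \<and> sat M (upd (\<rho>(v := a)) vs xs) \<psi>))"
  proof -
    have step2: "sat M (\<rho>(v := a, ?d' := cp (\<rho> ?dk) a)) (G mx mb \<psi> (Suc k) vs) \<longleftrightarrow>
     (\<exists>xs. length xs = length vs \<and> (\<forall>x\<in>set xs. M x N) \<and>
      \<rho> (mx + 1) = foldl cp (cp (\<rho> ?dk) a) xs \<and> sat M (upd (\<rho>(v := a)) vs xs) \<psi>)" if "M a N" for a
      by (rule step) (rule cp_N[OF Cons.prems(6) that])
    show ?thesis using step2 by blast
  qed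
  also have "\<dots> \<longleftrightarrow> (\<exists>xs. length xs = length (v # vs) \<and> (\<forall>x\<in>set xs. M x N) \<and>
      \<rho> (mx + 1) = foldl cp (\<rho> ?dk) xs \<and> sat M (upd \<rho> (v # vs) xs) \<psi>)"
  proof
    assume "\<exists>a. M a N \<and> (\<exists>xs. length xs = length vs \<and> (\<forall>x\<in>set xs. M x N) \<and>
      \<rho> (mx + 1) = foldl cp (cp (\<rho> ?dk) a) xs \<and> sat M (upd (\<rho>(v := a)) vs xs) \<psi>)"
    then obtain a xs where "M a N" "length xs = length vs" "\<forall>x\<in>set xs. M x N"
      "\<rho> (mx + 1) = foldl cp (cp (\<rho> ?dk) a) xs" "sat M (upd (\<rho>(v := a)) vs xs) \<psi>" by blast
    then show "\<exists>xs. length xs = length (v # vs) \<and> (\<forall>x\<in>set xs. M x N) \<and>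
      \<rho> (mx + 1) = foldl cp (\<rho> ?dk) xs \<and> sat M (upd \<rho> (v # vs) xs) \<psi>"
      by (intro exI[of _ "a # xs"]) auto
  next
    assume "\<exists>xs. length xs = length (v # vs) \<and> (\<forall>x\<in>set xs. M x N) \<and>
      \<rho> (mx + 1) = foldl cp (\<rho> ?dk) xs \<and> sat M (upd \<rho> (v # vs) xs) \<psi>"
    then obtain xs where h: "length xs = length (v # vs)" "\<forall>x\<in>set xs. M x N"
      "\<rho> (mx + 1) = foldl cp (\<rho> ?dk) xs" "sat M (upd \<rho> (v # vs) xs) \<psi>" by blast
    then obtain a xs' where "xs = a # xs'" by (cases xs) auto
    then show "\<exists>a. M a N \<and> (\<exists>xs. length xs = length vs \<and> (\<forall>x\<in>set xs. M x N) \<and>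
      \<rho> (mx + 1) = foldl cp (cp (\<rho> ?dk) a) xs \<and> sat M (upd (\<rho>(v := a)) vs xs) \<psi>)"
      using h by auto
  qed
  finally show ?case .
qed

end



context spot begin

lemma ax_sp: "\<forall>A. (\<forall>x. M x A \<longrightarrow> M x N) \<longrightarrow>
        (\<exists>B. st B \<and> (\<forall>x. M x B \<longrightarrow> M x N) \<and> (\<forall>n. st n \<and> M n N \<longrightarrow> (M n B \<longleftrightarrow> M n A)))"
  using spot unfolding spot_model_def by simp

lemma SepSt:
  assumes cl: "cl 1 f" and ps: "\<forall>j\<in>pars f. st (p j)" and sa: "st a"
  shows "\<exists>b. st b \<and> (\<forall>x. M x b \<longleftrightarrow> M x a \<and> dsat M (x ## e) p f)"
proof -
  obtain b where b: "\<forall>x. M x b \<longleftrightarrow> M x a \<and> dsat M (x ## e) p f" using Sep[OF cl] by blast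
  define k where "k = pb f"
  define p' where "p' = p(k := a)"
  define g where "g = DAll (DIff (DMem (B 0) (B 1)) (DConj (DMem (B 0) (P k)) f))"
  have cong: "dsat M (x ## y ## e) p' f = dsat M (x ## e) p f" for x y
    by (rule dsat_cong[OF cl]) (use pb_pars in \<open>auto simp: p'_def k_def\<close>)
  have sem: "dsat M (y ## e) p' g \<longleftrightarrow> (\<forall>x. M x y \<longleftrightarrow> M x a \<and> dsat M (x ## e) p f)" for y
    unfolding g_def using cong by (auto simp: p'_def)
  have "st b"
  proof (rule TransferUniq[where f = g and p = p' and e = e])
    show "cl 1 g" unfolding g_def using cl_mono[OF cl] by simp
    show "\<forall>j\<in>pars g. st (p' j)" unfolding g_def p'_def using ps sa by auto
    show "dsat M (b ## e) p' g" using sem b by blast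
    fix y assume "dsat M (y ## e) p' g"
    then have "\<forall>x. M x y \<longleftrightarrow> M x b" using sem b by blast
    then show "y = b" using ext by blast
  qed
  then show ?thesis using b by blast
qed

lemma base_claim:
  "\<exists>B. st B \<and> (\<forall>x. M x B \<longrightarrow> M x N) \<and> (\<forall>xs. length xs = length vs \<longrightarrow> (\<forall>x\<in>set xs. M x N \<and> st x) \<longrightarrow>
      (sat M (upd \<rho> vs xs) \<psi> \<longleftrightarrow> M (code xs) B))"
proof -
  define mx where "mx = Suc (Max (fv \<psi> \<union> set vs))"
  have fin: "finite (fv \<psi> \<union> set vs)" using finite_fv by simp
  have lt: "\<forall>v\<in>fv \<psi> \<union> set vs. v < mx" unfolding mx_def using Max_ge[OF fin] by (simp add: less_Suc_eq_le)
  define L where "L = length vs"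
  define mb where "mb = mx + 3 + L"
  define \<rho>0 where "\<rho>0 = \<rho>(mx := N, mx + 2 := emp)"
  obtain A where A: "\<forall>c. M c A \<longleftrightarrow> M c N \<and> sat M (\<rho>0(mx + 1 := c)) (G mx mb \<psi> 0 vs)"
    using ax_sep by blast
  obtain B where B: "st B" "\<forall>x. M x B \<longrightarrow> M x N" "\<forall>n. st n \<and> M n N \<longrightarrow> (M n B \<longleftrightarrow> M n A)"
    using ax_sp A by blast
  have "sat M (upd \<rho> vs xs) \<psi> \<longleftrightarrow> M (code xs) B"
    if len: "length xs = length vs" and xsN: "\<forall>x\<in>set xs. M x N \<and> st x" for xs
  proof -
    define c where "c = code xs"
    have cN: "M c N" unfolding c_def using code_N xsN by blast
    have cst: "st c" unfolding c_def using code_st xsN by blast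
    define \<rho>1 where "\<rho>1 = \<rho>0(mx + 1 := c)"
    have "sat M \<rho>1 (G mx mb \<psi> 0 vs) \<longleftrightarrow> (\<exists>ys. length ys = length vs \<and> (\<forall>x\<in>set ys. M x N) \<and>
      \<rho>1 (mx + 1) = foldl cp (\<rho>1 (mx + 2 + 0)) ys \<and> sat M (upd \<rho>1 vs ys) \<psi>)"
      by (rule sat_G[where L = L]) (use lt in \<open>auto simp: L_def mb_def \<rho>1_def \<rho>0_def\<close>)
    also have "\<dots> \<longleftrightarrow> (\<exists>ys. length ys = length vs \<and> (\<forall>x\<in>set ys. M x N) \<and>
      code xs = code ys \<and> sat M (upd \<rho>1 vs ys) \<psi>)"
      by (simp add: \<rho>1_def \<rho>0_def c_def code_def)
    also have "\<dots> \<longleftrightarrow> sat M (upd \<rho>1 vs xs) \<psi>"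
    proof
      assume "\<exists>ys. length ys = length vs \<and> (\<forall>x\<in>set ys. M x N) \<and> code xs = code ys \<and> sat M (upd \<rho>1 vs ys) \<psi>"
      then obtain ys where ys: "length ys = length vs" "\<forall>x\<in>set ys. M x N" "code xs = code ys" "sat M (upd \<rho>1 vs ys) \<psi>"
        by blast
      have "xs = ys" by (rule code_inj) (use ys len xsN in auto)
      then show "sat M (upd \<rho>1 vs xs) \<psi>" using ys by simp
    next
      assume "sat M (upd \<rho>1 vs xs) \<psi>"
      then show "\<exists>ys. length ys = length vs \<and> (\<forall>x\<in>set ys. M x N) \<and> code xs = code ys \<and> sat M (upd \<rho>1 vs ys) \<psi>"
        using len xsN by (intro exI[of _ xs]) auto
    qed
    also have "\<dots> \<longleftrightarrow> sat M (upd \<rho> vs xs) \<psi>"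
    proof -
      have nv: "mx \<notin> set vs" "mx + 1 \<notin> set vs" "mx + 2 \<notin> set vs" using lt by (auto dest!: bspec)
      have nf: "mx \<notin> fv \<psi>" "mx + 1 \<notin> fv \<psi>" "mx + 2 \<notin> fv \<psi>" using lt by (auto dest!: bspec)
      have "upd \<rho>1 vs xs = (((upd \<rho> vs xs)(mx := N))(mx + 2 := emp))(mx + 1 := c)"
        unfolding \<rho>1_def \<rho>0_def using nv by (simp add: upd_fresh)
      then show ?thesis using nf by (simp add: sat_fresh)
    qed
    finally have "M c A \<longleftrightarrow> sat M (upd \<rho> vs xs) \<psi>" using A cN unfolding \<rho>1_def by simp
    then show ?thesis using B(3) cst cN c_def by blast
  qed
  then show ?thesis using B(1,2) by blast
qed

lemma prenex_claim:
  "\<forall>vs. \<exists>B. st B \<and> (\<forall>x. M x B \<longrightarrow> M x N) \<and> (\<forall>xs. length xs = length vs \<longrightarrow> (\<forall>x\<in>set xs. M x N \<and> st x) \<longrightarrow>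
      (sat_prenex M st (upd \<rho> vs xs) qs \<psi> \<longleftrightarrow> M (code xs) B))"
proof (induction qs)
  case Nil
  then show ?case using base_claim by simp
next
  case (Cons q qs)
  obtain b u where q: "q = (b, u)" by fastforce
  show ?case
  proof
    fix vs
    obtain B' where B': "st B'" "\<forall>x. M x B' \<longrightarrow> M x N"
      "\<forall>xs. length xs = length (vs @ [u]) \<longrightarrow> (\<forall>x\<in>set xs. M x N \<and> st x) \<longrightarrow>
      (sat_prenex M st (upd \<rho> (vs @ [u]) xs) qs \<psi> \<longleftrightarrow> M (code xs) B')"
      using Cons.IH by blast
    have IH': "sat_prenex M st ((upd \<rho> vs xs)(u := a)) qs \<psi> \<longleftrightarrow> M (cp (code xs) a) B'"
      if "length xs = length vs" "\<forall>x\<in>set xs. M x N \<and> st x" "M a N" "st a" for xs a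
    proof -
      have l: "length (xs @ [a]) = length (vs @ [u])" using that by simp
      have m: "\<forall>x\<in>set (xs @ [a]). M x N \<and> st x" using that by auto
      have "sat_prenex M st (upd \<rho> (vs @ [u]) (xs @ [a])) qs \<psi> \<longleftrightarrow> M (code (xs @ [a])) B'"
        using B'(3) l m by blast
      then show ?thesis using upd_snoc[of xs vs \<rho> u a] that(1) by simp
    qed
    show "\<exists>B. st B \<and> (\<forall>x. M x B \<longrightarrow> M x N) \<and> (\<forall>xs. length xs = length vs \<longrightarrow> (\<forall>x\<in>set xs. M x N \<and> st x) \<longrightarrow>
      (sat_prenex M st (upd \<rho> vs xs) (q # qs) \<psi> \<longleftrightarrow> M (code xs) B))"
    proof (cases b)
      case True
      define f where "f = DAll (DImp (DMem (B 0) (P 0)) (DAll (DImp (CD (P 0) (B 2) (B 1) (B 0)) (DMem (B 0) (P 1)))))"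
      obtain BB where BB: "st BB" "\<forall>x. M x BB \<longleftrightarrow> M x N \<and> dsat M (x ## (\<lambda>_. emp)) (\<lambda>j. [N, B'] ! j) f"
        using SepSt[of f "\<lambda>j. [N, B'] ! j" N "\<lambda>_. emp"] st_N B'(1) unfolding f_def by (auto simp: nth_Cons')
      have BB': "M c BB \<longleftrightarrow> M c N \<and> (\<forall>a. M a N \<longrightarrow> M (cp c a) B')" for c
        using BB(2) Cr_iff unfolding f_def by auto
      have "sat_prenex M st (upd \<rho> vs xs) (q # qs) \<psi> \<longleftrightarrow> M (code xs) BB"
        if len: "length xs = length vs" and xsN: "\<forall>x\<in>set xs. M x N \<and> st x" for xs
      proof -
        define c where "c = code xs"
        have cN: "M c N" unfolding c_def using code_N xsN by blast
        have cst: "st c" unfolding c_def using code_st xsN by blast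
        define g where "g = DImp (DMem (B 0) (P 0)) (DAll (DImp (CD (P 0) (P 1) (B 1) (B 0)) (DMem (B 0) (P 2))))"
        have gsem: "dsat M (a ## (\<lambda>_. emp)) (\<lambda>j. [N, c, B'] ! j) g \<longleftrightarrow> (M a N \<longrightarrow> M (cp c a) B')" for a
          unfolding g_def using Cr_iff cN by auto
        have "sat_prenex M st (upd \<rho> vs xs) (q # qs) \<psi> \<longleftrightarrow> (\<forall>a. M a N \<and> st a \<longrightarrow> M (cp c a) B')"
          using IH'[OF len xsN] q True c_def by auto
        also have "\<dots> \<longleftrightarrow> (\<forall>a. M a N \<longrightarrow> M (cp c a) B')"
        proof
          assume h: "\<forall>a. M a N \<and> st a \<longrightarrow> M (cp c a) B'"
          show "\<forall>a. M a N \<longrightarrow> M (cp c a) B'"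
          proof (intro allI)
            fix a
            have "dsat M (a ## (\<lambda>_. emp)) (\<lambda>j. [N, c, B'] ! j) g"
              by (rule Transfer) (use h gsem st_N cst B'(1) in \<open>auto simp: g_def nth_Cons'\<close>)
            then show "M a N \<longrightarrow> M (cp c a) B'" using gsem by blast
          qed
        qed auto
        finally show ?thesis using BB' cN c_def by blast
      qed
      moreover have "\<forall>x. M x BB \<longrightarrow> M x N" using BB(2) by blast
      ultimately show ?thesis using BB(1) by blast
    next
      case False
      define f where "f = DEx (DConj (DMem (B 0) (P 0)) (DEx (DConj (CD (P 0) (B 2) (B 1) (B 0)) (DMem (B 0) (P 1)))))"
      obtain BB where BB: "st BB" "\<forall>x. M x BB \<longleftrightarrow> M x N \<and> dsat M (x ## (\<lambda>_. emp)) (\<lambda>j. [N, B'] ! j) f"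
        using SepSt[of f "\<lambda>j. [N, B'] ! j" N "\<lambda>_. emp"] st_N B'(1) unfolding f_def by (auto simp: nth_Cons')
      have BB': "M c BB \<longleftrightarrow> M c N \<and> (\<exists>a. M a N \<and> M (cp c a) B')" for c
        using BB(2) Cr_iff unfolding f_def by auto
      have "sat_prenex M st (upd \<rho> vs xs) (q # qs) \<psi> \<longleftrightarrow> M (code xs) BB"
        if len: "length xs = length vs" and xsN: "\<forall>x\<in>set xs. M x N \<and> st x" for xs
      proof -
        define c where "c = code xs"
        have cN: "M c N" unfolding c_def using code_N xsN by blast
        have cst: "st c" unfolding c_def using code_st xsN by blast
        define g where "g = DConj (DMem (B 0) (P 0)) (DEx (DConj (CD (P 0) (P 1) (B 1) (B 0)) (DMem (B 0) (P 2))))"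
        have gsem: "dsat M (a ## (\<lambda>_. emp)) (\<lambda>j. [N, c, B'] ! j) g \<longleftrightarrow> (M a N \<and> M (cp c a) B')" for a
          unfolding g_def using Cr_iff cN by auto
        have "sat_prenex M st (upd \<rho> vs xs) (q # qs) \<psi> \<longleftrightarrow> (\<exists>a. M a N \<and> st a \<and> M (cp c a) B')"
          using IH'[OF len xsN] q False c_def by auto
        also have "\<dots> \<longleftrightarrow> (\<exists>a. M a N \<and> M (cp c a) B')"
        proof
          assume "\<exists>a. M a N \<and> M (cp c a) B'"
          then obtain a where "M a N \<and> M (cp c a) B'" by blast
          then have "dsat M (a ## (\<lambda>_. emp)) (\<lambda>j. [N, c, B'] ! j) g" using gsem by blast
          then obtain y where "st y" "dsat M (y ## (\<lambda>_. emp)) (\<lambda>j. [N, c, B'] ! j) g"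
            using TransferEx[of g "\<lambda>j. [N, c, B'] ! j"] st_N cst B'(1) by (auto simp: g_def nth_Cons')
          then show "\<exists>a. M a N \<and> st a \<and> M (cp c a) B'" using gsem by blast
        qed auto
        finally show ?thesis using BB' cN c_def by blast
      qed
      moreover have "\<forall>x. M x BB \<longrightarrow> M x N" using BB(2) by blast
      ultimately show ?thesis using BB(1) by blast
    qed
  qed
qed

lemma main:
  "\<exists>S. st S \<and> (\<forall>x. st x \<longrightarrow> (M x S \<longleftrightarrow> M x N \<and> sat_prenex M st (\<rho>(n := x)) qs \<psi>))"
proof -
  obtain B0 where B0: "st B0" "\<forall>x. M x B0 \<longrightarrow> M x N"
    "\<forall>xs. length xs = length [n] \<longrightarrow> (\<forall>x\<in>set xs. M x N \<and> st x) \<longrightarrow>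
      (sat_prenex M st (upd \<rho> [n] xs) qs \<psi> \<longleftrightarrow> M (code xs) B0)"
    using prenex_claim[of \<rho> qs \<psi>] by blast
  define f where "f = DEx (DConj (CD (P 0) (P 1) (B 1) (B 0)) (DMem (B 0) (P 2)))"
  obtain S where S: "st S" "\<forall>x. M x S \<longleftrightarrow> M x N \<and> dsat M (x ## (\<lambda>_. emp)) (\<lambda>j. [N, emp, B0] ! j) f"
    using SepSt[of f "\<lambda>j. [N, emp, B0] ! j" N "\<lambda>_. emp"] st_N st_emp B0(1) unfolding f_def by (auto simp: nth_Cons')
  have S': "M x S \<longleftrightarrow> M x N \<and> M (cp emp x) B0" for x
    using S(2) Cr_iff unfolding f_def by auto
  have "M x S \<longleftrightarrow> M x N \<and> sat_prenex M st (\<rho>(n := x)) qs \<psi>" if "st x" for x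
  proof (cases "M x N")
    case True
    have "sat_prenex M st (upd \<rho> [n] [x]) qs \<psi> \<longleftrightarrow> M (code [x]) B0"
      using B0(3) True that by (metis length_Cons list.size(3) set_ConsD empty_iff list.set(1))
    moreover have "upd \<rho> [n] [x] = \<rho>(n := x)" by simp
    moreover have "code [x] = cp emp x" using code_snoc[of "[]" x] by simp
    ultimately show ?thesis using S' True by simp
  next
    case False
    then show ?thesis using S' by simp
  qed
  then show ?thesis using S(1) by blast
qed

end


theorem proposition2p7:
  fixes M :: "'u \<Rightarrow> 'u \<Rightarrow> bool" and st :: "'u \<Rightarrow> bool"
    and qs :: "(bool \<times> nat) list" and \<psi> :: fm and n :: nat and \<rho> :: "nat \<Rightarrow> 'u"
  assumes "spot_model M st"
  shows "\<exists>S. st S \<and> (\<forall>x. st x \<longrightarrow>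
            (M x S \<longleftrightarrow> M x (nat_zf M) \<and> sat_prenex M st (\<rho>(n := x)) qs \<psi>))"
proof -
  interpret spot M st by (rule spot.intro) (rule assms)
  show ?thesis by (rule main)
qed

end
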